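(* There is a LOGSPACE-computable many-one reduction $\phi$ from the query evaluation problem for temporal Datalog (given a query $Q$, a dataset $D$ and a tuple $\vec a$, decide whether $\Pi_Q\cup D\models P_Q(\vec a)$) to DTP such that, for each query evaluation instance $I=\langle Q,D,\vec a\rangle$, the query occurring in $\phi(I)$ depends only on $Q$ (and not on $D$ or $\vec a$).
   Context: Temporal Datalog. Constants are partitioned into objects and integer time points; variables into object variables and time variables. A time term is a time point, a time variable, or an expression $t+k$ with $t$ a time variable and $k\in\mathbb{Z}$. Each predicate is either extensional (EDB) or intensional (IDB) and has an arity $n\ge0$, each position being of object sort or time sort; a predicate is rigid if all its positions are of object sort, and temporal if its last position is of time sort and all others are of object sort. An atom $P(t_1,\dots,t_n)$ has terms of the required sorts. A rule is $\bigwedge_i\alpha_i\to\alpha$ with $\alpha$ and all $\alpha_i$ rigid or temporal atoms, $\alpha$ IDB whenever the body is nonempty, and every head variable occurring in the body. A program is a finite set of rules. A fact is a ground rigid or temporal atom without $+$ (identified with the rule $\top\to\alpha$); a dataset is a finite set of EDB facts. Rules are read as universally quantified first-order sentences with $+$ interpreted as integer addition; $\Pi\models\alpha$ denotes entailment. A query is $Q=\langle P_Q,\Pi_Q\rangle$ with $\Pi_Q$ a program and $P_Q$ an IDB predicate of $\Pi_Q$; it is temporal if $P_Q$ is temporal. For a temporal query $Q$, dataset $D$ and time point $\tau$, $Q(D,\tau)$ is the set of tuples of objects $\vec o$ with $\Pi_Q\cup D\models P_Q(\vec o,\tau)$. A $\tau_{in}$-history is a dataset consisting of rigid facts and temporal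 facts with time argument $\le\tau_{in}$; a $\tau_{in}$-update is a dataset consisting of temporal facts with time argument $>\tau_{in}$. Definitive Time Point (DTP): an instance is $\langle Q,D,\tau_{in},\tau_{out}\rangle$ with $Q$ a temporal query, $D$ a $\tau_{in}$-history and $\tau_{out}\le\tau_{in}$; DTP holds for it iff $Q(D,\tau_{out})=Q(D\cup U,\tau_{out})$ for every $\tau_{in}$-update $U$. *)

theory Defs
  imports Complex_Main
begin

section \<open>Syntax of temporal Datalog\<close>

text \<open>Objects are natural numbers, time points are integers.  Object variables and
time variables are natural numbers in two separate name spaces.\<close>

datatype sort = SObj | STime

text \<open>A term: an object constant, an object variable, a time point, or a time term
  t + k with t a time variable and k an integer (a plain time variable t is t + 0).\<close>
datatype trm = OC nat | OV nat | TC int | TV nat int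

fun trm_sort :: "trm \<Rightarrow> sort" where
  "trm_sort (OC _) = SObj" | "trm_sort (OV _) = SObj"
| "trm_sort (TC _) = STime" | "trm_sort (TV _ _) = STime"

datatype var = ObjVar nat | TimeVar nat

fun trm_vars :: "trm \<Rightarrow> var set" where
  "trm_vars (OC _) = {}" | "trm_vars (OV x) = {ObjVar x}"
| "trm_vars (TC _) = {}" | "trm_vars (TV x _) = {TimeVar x}"

text \<open>A predicate: a name, a flag telling whether it is intensional (IDB, True) or
  extensional (EDB, False), and the list of sorts of its positions (its arity is the
  length of that list).\<close>
datatype pred = Pred (pname: nat) (pidb: bool) (psorts: "sort list")

definition rigid :: "pred \<Rightarrow> bool" where
  "rigid p \<longleftrightarrow> (\<forall>s\<in>set (psorts p). s = SObj)"

definition temporal :: "pred \<Rightarrow> bool" where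
  "temporal p \<longleftrightarrow> psorts p \<noteq> [] \<and> last (psorts p) = STime
     \<and> (\<forall>s\<in>set (butlast (psorts p)). s = SObj)"

datatype atom = Atom (apred: pred) (aargs: "trm list")

definition atom_vars :: "atom \<Rightarrow> var set" where
  "atom_vars a = (\<Union>t\<in>set (aargs a). trm_vars t)"

definition wf_atom :: "atom \<Rightarrow> bool" where
  "wf_atom a \<longleftrightarrow> map trm_sort (aargs a) = psorts (apred a)
     \<and> (rigid (apred a) \<or> temporal (apred a))"

datatype rule = Rule (body: "atom list") (head: atom)

definition wf_rule :: "rule \<Rightarrow> bool" where
  "wf_rule r \<longleftrightarrow> (\<forall>a\<in>set (body r). wf_atom a) \<and> wf_atom (head r)
     \<and> (body r \<noteq> [] \<longrightarrow> pidb (apred (head r)))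
     \<and> atom_vars (head r) \<subseteq> (\<Union>a\<in>set (body r). atom_vars a)"

type_synonym program = "rule list"

definition wf_program :: "program \<Rightarrow> bool" where
  "wf_program P \<longleftrightarrow> (\<forall>r\<in>set P. wf_rule r)"

definition is_fact :: "atom \<Rightarrow> bool" where
  "is_fact a \<longleftrightarrow> wf_atom a \<and> atom_vars a = {}"

type_synonym dataset = "atom list"

definition is_dataset :: "dataset \<Rightarrow> bool" where
  "is_dataset D \<longleftrightarrow> (\<forall>a\<in>set D. is_fact a \<and> \<not> pidb (apred a))"

definition fact_rule :: "atom \<Rightarrow> rule" where
  "fact_rule a = Rule [] a"

section \<open>Semantics\<close>

datatype val = VO nat | VT int

type_synonym interp = "pred \<Rightarrow> val list set"
type_synonym valuation = "(nat \<Rightarrow> nat) \<times> (nat \<Rightarrow> int)"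

fun eval_trm :: "valuation \<Rightarrow> trm \<Rightarrow> val" where
  "eval_trm \<sigma> (OC c) = VO c"
| "eval_trm \<sigma> (OV x) = VO (fst \<sigma> x)"
| "eval_trm \<sigma> (TC t) = VT t"
| "eval_trm \<sigma> (TV x k) = VT (snd \<sigma> x + k)"

definition sat_atom :: "interp \<Rightarrow> valuation \<Rightarrow> atom \<Rightarrow> bool" where
  "sat_atom I \<sigma> a \<longleftrightarrow> map (eval_trm \<sigma>) (aargs a) \<in> I (apred a)"

definition is_model :: "interp \<Rightarrow> rule set \<Rightarrow> bool" where
  "is_model I R \<longleftrightarrow> (\<forall>r\<in>R. \<forall>\<sigma>. (\<forall>b\<in>set (body r). sat_atom I \<sigma> b) \<longrightarrow> sat_atom I \<sigma> (head r))"

definition entails :: "rule set \<Rightarrow> atom \<Rightarrow> bool" where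
  "entails R a \<longleftrightarrow> (\<forall>I. is_model I R \<longrightarrow> (\<forall>\<sigma>. sat_atom I \<sigma> a))"

definition prog_with_data :: "program \<Rightarrow> dataset \<Rightarrow> rule set" where
  "prog_with_data P D = set P \<union> fact_rule ` set D"

type_synonym query = "pred \<times> program"

definition preds_of :: "program \<Rightarrow> pred set" where
  "preds_of P = (\<Union>r\<in>set P. apred ` (set (body r) \<union> {head r}))"

definition is_query :: "query \<Rightarrow> bool" where
  "is_query Q \<longleftrightarrow> wf_program (snd Q) \<and> pidb (fst Q) \<and> fst Q \<in> preds_of (snd Q)"

definition is_temporal_query :: "query \<Rightarrow> bool" where
  "is_temporal_query Q \<longleftrightarrow> is_query Q \<and> temporal (fst Q)"

definition answers :: "query \<Rightarrow> dataset \<Rightarrow> int \<Rightarrow> nat list set" where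
  "answers Q D \<tau> = {os. entails (prog_with_data (snd Q) D)
                         (Atom (fst Q) (map OC os @ [TC \<tau>]))}"

section \<open>Query evaluation and DTP\<close>

datatype const = CO nat | CT int

fun const_trm :: "const \<Rightarrow> trm" where
  "const_trm (CO c) = OC c" | "const_trm (CT t) = TC t"

type_synonym qe_inst = "query \<times> dataset \<times> const list"

definition qe_instance :: "qe_inst \<Rightarrow> bool" where
  "qe_instance I = (case I of (Q, D, a) \<Rightarrow>
     is_query Q \<and> is_dataset D \<and> map (trm_sort \<circ> const_trm) a = psorts (fst Q))"

definition qe_holds :: "qe_inst \<Rightarrow> bool" where
  "qe_holds I = (case I of (Q, D, a) \<Rightarrow>
     entails (prog_with_data (snd Q) D) (Atom (fst Q) (map const_trm a)))"

definition atom_time :: "atom \<Rightarrow> int option" where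
  "atom_time a = (case aargs a of [] \<Rightarrow> None | ts \<Rightarrow>
     (case last ts of TC t \<Rightarrow> Some t | _ \<Rightarrow> None))"

definition is_history :: "int \<Rightarrow> dataset \<Rightarrow> bool" where
  "is_history \<tau>in D \<longleftrightarrow> is_dataset D \<and>
     (\<forall>a\<in>set D. rigid (apred a) \<or> (temporal (apred a) \<and> (\<exists>t. atom_time a = Some t \<and> t \<le> \<tau>in)))"

definition is_update :: "int \<Rightarrow> dataset \<Rightarrow> bool" where
  "is_update \<tau>in U \<longleftrightarrow> is_dataset U \<and>
     (\<forall>a\<in>set U. temporal (apred a) \<and> (\<exists>t. atom_time a = Some t \<and> t > \<tau>in))"

type_synonym dtp_inst = "query \<times> dataset \<times> int \<times> int"

definition dtp_instance :: "dtp_inst \<Rightarrow> bool" where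
  "dtp_instance J = (case J of (Q, D, \<tau>in, \<tau>out) \<Rightarrow>
     is_temporal_query Q \<and> is_history \<tau>in D \<and> \<tau>out \<le> \<tau>in)"

definition dtp_holds :: "dtp_inst \<Rightarrow> bool" where
  "dtp_holds J = (case J of (Q, D, \<tau>in, \<tau>out) \<Rightarrow>
     (\<forall>U. is_update \<tau>in U \<longrightarrow> answers Q D \<tau>out = answers Q (D @ U) \<tau>out))"

section \<open>Encoding of instances as strings\<close>

datatype sym = S0 | S1 | SLeaf | SEnd | SOpen | SClose

datatype sexp = Leaf nat | Node "sexp list"

fun bin :: "nat \<Rightarrow> sym list" where
  "bin n = (if n = 0 then [] else bin (n div 2) @ [if even n then S0 else S1])"

fun ser :: "sexp \<Rightarrow> sym list" where
  "ser (Leaf n) = SLeaf # bin n @ [SEnd]"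
| "ser (Node xs) = SOpen # concat (map ser xs) @ [SClose]"

definition enc_int :: "int \<Rightarrow> sexp" where
  "enc_int i = Node [Leaf (if i < 0 then 1 else 0), Leaf (nat \<bar>i\<bar>)]"

fun enc_sort :: "sort \<Rightarrow> sexp" where
  "enc_sort SObj = Leaf 0" | "enc_sort STime = Leaf 1"

fun enc_pred :: "pred \<Rightarrow> sexp" where
  "enc_pred (Pred n b ss) = Node [Leaf n, Leaf (if b then 1 else 0), Node (map enc_sort ss)]"

fun enc_trm :: "trm \<Rightarrow> sexp" where
  "enc_trm (OC c) = Node [Leaf 0, Leaf c]"
| "enc_trm (OV x) = Node [Leaf 1, Leaf x]"
| "enc_trm (TC t) = Node [Leaf 2, enc_int t]"
| "enc_trm (TV x k) = Node [Leaf 3, Leaf x, enc_int k]"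

fun enc_atom :: "atom \<Rightarrow> sexp" where
  "enc_atom (Atom p ts) = Node [enc_pred p, Node (map enc_trm ts)]"

fun enc_rule :: "rule \<Rightarrow> sexp" where
  "enc_rule (Rule bs h) = Node [Node (map enc_atom bs), enc_atom h]"

definition enc_query :: "query \<Rightarrow> sexp" where
  "enc_query Q = Node [enc_pred (fst Q), Node (map enc_rule (snd Q))]"

definition enc_dataset :: "dataset \<Rightarrow> sexp" where
  "enc_dataset D = Node (map enc_atom D)"

fun enc_const :: "const \<Rightarrow> sexp" where
  "enc_const (CO c) = Node [Leaf 0, Leaf c]" | "enc_const (CT t) = Node [Leaf 1, enc_int t]"

definition enc_qe :: "qe_inst \<Rightarrow> sym list" where
  "enc_qe I = (case I of (Q, D, a) \<Rightarrow>
     ser (Node [enc_query Q, enc_dataset D, Node (map enc_const a)]))"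

definition enc_dtp :: "dtp_inst \<Rightarrow> sym list" where
  "enc_dtp J = (case J of (Q, D, ti, to) \<Rightarrow>
     ser (Node [enc_query Q, enc_dataset D, enc_int ti, enc_int to]))"

section \<open>Logspace transducers\<close>

text \<open>A deterministic Turing transducer with a read-only two-way input tape (with
  endmarkers, read as None), one read/write work tape, and a write-only one-way outp
  tape.  States are 0..<nst (0 initial, 1 halting), work symbols 0..<nwk (0 blank).
  The transition maps (state, input symbol, work symbol) to
  (new state, written work symbol, input head move, work head move, outp symbol or none).\<close>
record tm =
  nst :: nat
  nwk :: nat
  delta :: "nat \<Rightarrow> sym option \<Rightarrow> nat \<Rightarrow> nat \<times> nat \<times> int \<times> int \<times> sym option"

definition wf_tm :: "tm \<Rightarrow> bool" where
  "wf_tm M \<longleftrightarrow> 2 \<le> nst M \<and> 1 \<le> nwk M \<and>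
     (\<forall>q<nst M. \<forall>a g. g < nwk M \<longrightarrow>
        (case delta M q a g of (q', g', di, dw, _) \<Rightarrow>
           q' < nst M \<and> g' < nwk M \<and> di \<in> {-1, 0, 1} \<and> dw \<in> {-1, 0, 1}))"

record config =
  cstate :: nat
  ipos :: int
  wtape :: "int \<Rightarrow> nat"
  wpos :: int
  outp :: "sym list"

definition init_config :: config where
  "init_config = \<lparr>cstate = 0, ipos = 0, wtape = (\<lambda>_. 0), wpos = 0, outp = []\<rparr>"

definition read_input :: "sym list \<Rightarrow> int \<Rightarrow> sym option" where
  "read_input w p = (if 1 \<le> p \<and> p \<le> int (length w) then Some (w ! nat (p - 1)) else None)"

definition tm_step :: "tm \<Rightarrow> sym list \<Rightarrow> config \<Rightarrow> config" where
  "tm_step M w c = (if cstate c = 1 then c else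
     (case delta M (cstate c) (read_input w (ipos c)) (wtape c (wpos c)) of
        (q', g', di, dw, out) \<Rightarrow>
          \<lparr>cstate = q',
           ipos = max 0 (min (int (length w) + 1) (ipos c + di)),
           wtape = (wtape c)(wpos c := g'),
           wpos = wpos c + dw,
           outp = outp c @ (case out of None \<Rightarrow> [] | Some s \<Rightarrow> [s])\<rparr>))"

definition tm_run :: "tm \<Rightarrow> sym list \<Rightarrow> nat \<Rightarrow> config" where
  "tm_run M w k = (tm_step M w ^^ k) init_config"

definition tm_computes :: "tm \<Rightarrow> sym list \<Rightarrow> sym list \<Rightarrow> bool" where
  "tm_computes M w v \<longleftrightarrow> (\<exists>k. cstate (tm_run M w k) = 1 \<and> outp (tm_run M w k) = v)"

definition tm_space_bounded :: "tm \<Rightarrow> sym list \<Rightarrow> real \<Rightarrow> bool" where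
  "tm_space_bounded M w s \<longleftrightarrow> (\<forall>k. real_of_int \<bar>wpos (tm_run M w k)\<bar> \<le> s)"

definition logspace_computable ::
  "('a \<Rightarrow> bool) \<Rightarrow> ('a \<Rightarrow> sym list) \<Rightarrow> ('b \<Rightarrow> sym list) \<Rightarrow> ('a \<Rightarrow> 'b) \<Rightarrow> bool" where
  "logspace_computable isdom encA encB f \<longleftrightarrow>
     (\<exists>M c. wf_tm M \<and> (\<forall>x. isdom x \<longrightarrow>
        tm_computes M (encA x) (encB (f x)) \<and>
        tm_space_bounded M (encA x) (c * log 2 (real (length (encA x)) + 2))))"

end

theory Submission
  imports Defs "HOL-Library.Countable"
begin


declare bin.simps[simp del]

definition ren_pred :: "pred \<Rightarrow> pred" where "ren_pred p = Pred (4 * pname p + 2) (pidb p) (psorts p)"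
definition aux_pred :: "pred \<Rightarrow> pred" where "aux_pred p = Pred (2 * pname p + 1) (\<not> pidb p) (psorts p)"
definition ren_atom :: "atom \<Rightarrow> atom" where "ren_atom a = Atom (ren_pred (apred a)) (aargs a)"
definition aux_atom :: "atom \<Rightarrow> atom" where "aux_atom a = Atom (aux_pred (apred a)) (aargs a)"
definition okP :: pred where "okP = Pred 0 True []"
definition okA :: atom where "okA = Atom okP []"
definition gP :: pred where "gP = Pred 0 True [STime]"
definition allP :: pred where "allP = Pred 4 True [STime]"
definition eP :: pred where "eP = Pred 0 False [STime]"
definition ren_rule :: "rule \<Rightarrow> rule" where "ren_rule r = Rule (map ren_atom (body r)) (ren_atom (head r))"
definition aux_rule :: "rule \<Rightarrow> rule" where "aux_rule r = Rule (map ren_atom (body r) @ [aux_atom (head r)]) okA"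
definition fixed :: "rule list" where "fixed = [Rule [] (Atom allP [TC 0]),
  Rule [Atom allP [TV 0 0]] (Atom allP [TV 0 1]), Rule [Atom allP [TV 0 1]] (Atom allP [TV 0 0]),
  Rule [okA, Atom allP [TV 0 0]] (Atom gP [TV 0 0]), Rule [Atom eP [TV 0 0]] (Atom gP [TV 0 0]),
  Rule [Atom gP [TV 0 1]] (Atom gP [TV 0 0])]"
definition progQ :: "query \<Rightarrow> program" where "progQ Q = map ren_rule (snd Q) @ fixed @ map aux_rule (snd Q)"
definition qQ :: "query \<Rightarrow> query" where "qQ Q = (gP, progQ Q)"
definition dD :: "query \<Rightarrow> dataset \<Rightarrow> const list \<Rightarrow> dataset" where
  "dD Q D a = map ren_atom D @ [Atom (aux_pred (fst Q)) (map const_trm a)]"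
definition tin :: "qe_inst \<Rightarrow> int" where "tin I = 2 ^ length (enc_qe I) - 1"
definition phi :: "qe_inst \<Rightarrow> dtp_inst" where "phi I = (case I of (Q, D, a) \<Rightarrow> (qQ Q, dD Q D a, tin I, 0))"

fun cval :: "const \<Rightarrow> val" where "cval (CO c) = VO c" | "cval (CT t) = VT t"

lemma eval_const[simp]: "eval_trm \<sigma> (const_trm c) = cval c" by (cases c) auto

lemma model_Un: "is_model I (A \<union> B) \<longleftrightarrow> is_model I A \<and> is_model I B"
  unfolding is_model_def by blast

lemma model_facts: "is_model I (fact_rule ` X) \<longleftrightarrow> (\<forall>a\<in>X. \<forall>\<sigma>. sat_atom I \<sigma> a)"
  unfolding is_model_def fact_rule_def by auto

lemma model_rules: "is_model I (set R) \<longleftrightarrow> (\<forall>r\<in>set R. \<forall>\<sigma>. (\<forall>b\<in>set (body r). sat_atom I \<sigma> b) \<longrightarrow> sat_atom I \<sigma> (head r))"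
  unfolding is_model_def by auto

lemma pwd: "prog_with_data P D = set P \<union> fact_rule ` set D" by (simp add: prog_with_data_def)

lemma sat_ren: "sat_atom I \<sigma> (ren_atom x) = sat_atom (\<lambda>p. I (ren_pred p)) \<sigma> x"
  by (simp add: sat_atom_def ren_atom_def)

lemma sat_aux: "sat_atom I \<sigma> (aux_atom x) = (map (eval_trm \<sigma>) (aargs x) \<in> I (aux_pred (apred x)))"
  by (simp add: sat_atom_def aux_atom_def)

lemma inj_ren: "inj ren_pred"
  by (rule injI) (auto simp: ren_pred_def intro: pred.expand)
lemma inj_aux: "inj aux_pred"
  by (rule injI) (auto simp: aux_pred_def intro: pred.expand)

lemma ren_ne_aux[simp]: "ren_pred p \<noteq> aux_pred q"
proof -
  have "4 * pname p + 2 \<noteq> 2 * pname q + 1" by presburger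
  then show ?thesis by (simp add: ren_pred_def aux_pred_def)
qed
lemma aux_ne_ren[simp]: "aux_pred q \<noteq> ren_pred p" using ren_ne_aux by metis
lemma ren_ne_fixed[simp]: "ren_pred p \<noteq> okP" "ren_pred p \<noteq> gP" "ren_pred p \<noteq> allP" "ren_pred p \<noteq> eP"
  by (auto simp: ren_pred_def okP_def gP_def allP_def eP_def; presburger)+
lemma aux_ne_fixed[simp]: "aux_pred p \<noteq> okP" "aux_pred p \<noteq> gP" "aux_pred p \<noteq> allP" "aux_pred p \<noteq> eP"
  by (auto simp: aux_pred_def okP_def gP_def allP_def eP_def; presburger)+
lemma fixed_ne_sym[simp]: "okP \<noteq> ren_pred p" "gP \<noteq> ren_pred p" "allP \<noteq> ren_pred p" "eP \<noteq> ren_pred p"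
  "okP \<noteq> aux_pred p" "gP \<noteq> aux_pred p" "allP \<noteq> aux_pred p" "eP \<noteq> aux_pred p"
  using ren_ne_fixed aux_ne_fixed by metis+
lemma fixed_ne[simp]: "okP \<noteq> gP" "okP \<noteq> allP" "gP \<noteq> allP" "eP \<noteq> gP" "eP \<noteq> allP" "okP \<noteq> eP"
  by (auto simp: okP_def gP_def allP_def eP_def)

lemma progQ_set: "set (progQ Q) = ren_rule ` set (snd Q) \<union> set fixed \<union> aux_rule ` set (snd Q)"
  by (auto simp: progQ_def)

lemma fixed_sat:
  assumes "is_model I (set fixed)"
  shows "[VT 0] \<in> I allP" "\<And>t. [VT t] \<in> I allP \<Longrightarrow> [VT (t+1)] \<in> I allP"
    "\<And>t. [VT (t+1)] \<in> I allP \<Longrightarrow> [VT t] \<in> I allP"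
    "\<And>t. [] \<in> I okP \<Longrightarrow> [VT t] \<in> I allP \<Longrightarrow> [VT t] \<in> I gP"
    "\<And>t. [VT t] \<in> I eP \<Longrightarrow> [VT t] \<in> I gP"
    "\<And>t. [VT (t+1)] \<in> I gP \<Longrightarrow> [VT t] \<in> I gP"
proof -
  have m: "\<And>r \<sigma>. r \<in> set fixed \<Longrightarrow> (\<forall>b\<in>set (body r). sat_atom I \<sigma> b) \<Longrightarrow> sat_atom I \<sigma> (head r)"
    using assms by (auto simp: model_rules)
  let ?s = "\<lambda>t::int. ((\<lambda>_. 0::nat), (\<lambda>_. t))"
  show "[VT 0] \<in> I allP" using m[of "Rule [] (Atom allP [TC 0])" "?s 0"] by (simp add: fixed_def sat_atom_def)
  show "\<And>t. [VT t] \<in> I allP \<Longrightarrow> [VT (t+1)] \<in> I allP"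
    subgoal for t using m[of "Rule [Atom allP [TV 0 0]] (Atom allP [TV 0 1])" "?s t"] by (simp add: fixed_def sat_atom_def) done
  show "\<And>t. [VT (t+1)] \<in> I allP \<Longrightarrow> [VT t] \<in> I allP"
    subgoal for t using m[of "Rule [Atom allP [TV 0 1]] (Atom allP [TV 0 0])" "?s t"] by (simp add: fixed_def sat_atom_def) done
  show "\<And>t. [] \<in> I okP \<Longrightarrow> [VT t] \<in> I allP \<Longrightarrow> [VT t] \<in> I gP"
    subgoal for t using m[of "Rule [okA, Atom allP [TV 0 0]] (Atom gP [TV 0 0])" "?s t"] by (simp add: fixed_def sat_atom_def okA_def) done
  show "\<And>t. [VT t] \<in> I eP \<Longrightarrow> [VT t] \<in> I gP"
    subgoal for t using m[of "Rule [Atom eP [TV 0 0]] (Atom gP [TV 0 0])" "?s t"] by (simp add: fixed_def sat_atom_def) done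
  show "\<And>t. [VT (t+1)] \<in> I gP \<Longrightarrow> [VT t] \<in> I gP"
    subgoal for t using m[of "Rule [Atom gP [TV 0 1]] (Atom gP [TV 0 0])" "?s t"] by (simp add: fixed_def sat_atom_def) done
qed

lemma qe_yes:
  assumes inst: "qe_instance (Q, D, a)" and hold: "qe_holds (Q, D, a)"
  shows "entails (prog_with_data (progQ Q) (dD Q D a @ U)) (Atom gP [TC 0])"
  unfolding entails_def
proof (intro allI impI)
  fix I \<sigma> assume mod: "is_model I (prog_with_data (progQ Q) (dD Q D a @ U))"
  have mr: "\<And>r \<sigma>. r \<in> set (progQ Q) \<Longrightarrow> (\<forall>b\<in>set (body r). sat_atom I \<sigma> b) \<Longrightarrow> sat_atom I \<sigma> (head r)"
    using mod by (auto simp: pwd model_Un model_rules)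
  have mf: "\<And>x \<sigma>. x \<in> set (dD Q D a) \<Longrightarrow> sat_atom I \<sigma> x"
    using mod by (auto simp: pwd model_Un model_facts)
  have mfix: "is_model I (set fixed)" using mod by (auto simp: pwd model_Un model_rules progQ_def)
  have av: "map cval a \<in> I (aux_pred (fst Q))"
    using mf[of "Atom (aux_pred (fst Q)) (map const_trm a)" undefined] by (simp add: dD_def sat_atom_def comp_def)
  have pq: "pidb (fst Q)" using inst by (simp add: qe_instance_def is_query_def)
  have dsD: "\<And>d. d \<in> set D \<Longrightarrow> \<not> pidb (apred d)" using inst by (simp add: qe_instance_def is_dataset_def)
  have ok: "[] \<in> I okP"
  proof (rule ccontr)
    assume nok: "[] \<notin> I okP"
    define M where "M p = (if p = fst Q then I (ren_pred p) - {map cval a} else I (ren_pred p))" for p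
    have Msub: "\<And>\<sigma> b. sat_atom M \<sigma> b \<Longrightarrow> sat_atom I \<sigma> (ren_atom b)"
      by (auto simp: sat_atom_def ren_atom_def M_def split: if_splits)
    have "is_model M (prog_with_data (snd Q) D)"
      unfolding pwd model_Un model_rules model_facts
    proof (intro conjI ballI allI impI)
      fix r \<sigma>' assume r: "r \<in> set (snd Q)" and b: "\<forall>b\<in>set (body r). sat_atom M \<sigma>' b"
      have bI: "\<forall>b\<in>set (body (ren_rule r)). sat_atom I \<sigma>' b" using b Msub by (auto simp: ren_rule_def)
      have hI: "sat_atom I \<sigma>' (ren_atom (head r))"
        using mr[of "ren_rule r" \<sigma>'] bI r by (auto simp: progQ_def ren_rule_def)
      show "sat_atom M \<sigma>' (head r)"
      proof (cases "apred (head r) = fst Q \<and> map (eval_trm \<sigma>') (aargs (head r)) = map cval a")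
        case True
        have "\<forall>b\<in>set (body (aux_rule r)). sat_atom I \<sigma>' b"
          using bI True av by (auto simp: aux_rule_def ren_rule_def sat_aux)
        then have "sat_atom I \<sigma>' (head (aux_rule r))" using mr[of "aux_rule r" \<sigma>'] r by (auto simp: progQ_def)
        then show ?thesis using nok by (simp add: aux_rule_def okA_def sat_atom_def)
      next
        case False then show ?thesis using hI by (auto simp: sat_atom_def ren_atom_def M_def)
      qed
    next
      fix d \<sigma>' assume d: "d \<in> set D"
      have "sat_atom I \<sigma>' (ren_atom d)" using mf[of "ren_atom d"] d by (auto simp: dD_def)
      moreover have "apred d \<noteq> fst Q" using dsD[OF d] pq by auto
      ultimately show "sat_atom M \<sigma>' d" by (auto simp: sat_atom_def ren_atom_def M_def)
    qed
    moreover from hold have "entails (prog_with_data (snd Q) D) (Atom (fst Q) (map const_trm a))"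
      by (simp add: qe_holds_def)
    ultimately have "sat_atom M \<sigma> (Atom (fst Q) (map const_trm a))"
      unfolding entails_def by blast
    then show False by (simp add: sat_atom_def M_def comp_def)
  qed
  have all: "[VT t] \<in> I allP" for t
  proof (induct t rule: int_induct[where k=0])
    case base show ?case using fixed_sat(1)[OF mfix] .
  next
    case (step1 i) then show ?case using fixed_sat(2)[OF mfix] by blast
  next
    case (step2 i) then show ?case using fixed_sat(3)[OF mfix, of "i - 1"] by simp
  qed
  show "sat_atom I \<sigma> (Atom gP [TC 0])"
    using fixed_sat(4)[OF mfix ok all] by (simp add: sat_atom_def)
qed

lemma qe_no:
  assumes inst: "qe_instance (Q, D, a)" and nhold: "\<not> qe_holds (Q, D, a)"
  shows "\<not> entails (prog_with_data (progQ Q) (dD Q D a)) (Atom gP [TC 0])"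
proof -
  from nhold obtain M \<sigma>0 where mM: "is_model M (prog_with_data (snd Q) D)"
    and nM: "\<not> sat_atom M \<sigma>0 (Atom (fst Q) (map const_trm a))"
    by (auto simp: qe_holds_def entails_def)
  have nav: "map cval a \<notin> M (fst Q)" using nM by (simp add: sat_atom_def comp_def)
  define I where "I p = (if p \<in> range ren_pred then M (inv ren_pred p)
     else if p = aux_pred (fst Q) then {map cval a} else if p = allP then UNIV else {})" for p
  have Iren: "I (ren_pred q) = M q" for q by (simp add: I_def inv_f_f[OF inj_ren])
  have Iaux: "I (aux_pred q) = (if q = fst Q then {map cval a} else {})" for q
    by (auto simp: I_def inj_eq[OF inj_aux])
  have Iok: "I okP = {}" and IgP: "I gP = {}" and IeP: "I eP = {}" and Iall: "I allP = UNIV"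
    by (auto simp: I_def)
  have mr: "\<And>r \<sigma>. r \<in> set (snd Q) \<Longrightarrow> (\<forall>b\<in>set (body r). sat_atom M \<sigma> b) \<Longrightarrow> sat_atom M \<sigma> (head r)"
    using mM by (auto simp: pwd model_Un model_rules)
  have mf: "\<And>x \<sigma>. x \<in> set D \<Longrightarrow> sat_atom M \<sigma> x"
    using mM by (auto simp: pwd model_Un model_facts)
  have sren: "sat_atom I \<sigma> (ren_atom x) = sat_atom M \<sigma> x" for \<sigma> x
    by (simp add: sat_ren Iren)
  have "is_model I (prog_with_data (progQ Q) (dD Q D a))"
    unfolding pwd model_Un model_rules model_facts
  proof (intro conjI ballI allI impI)
    fix r \<sigma> assume r: "r \<in> set (progQ Q)" and b: "\<forall>b\<in>set (body r). sat_atom I \<sigma> b"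
    show "sat_atom I \<sigma> (head r)"
    proof -
      { fix r0 assume r0: "r0 \<in> set (snd Q)" "r = ren_rule r0"
        then have ?thesis using b mr[of r0 \<sigma>] by (simp add: ren_rule_def sren) }
      moreover
      { assume "r \<in> set fixed"
        then have ?thesis using b by (auto simp: fixed_def sat_atom_def Iok IgP IeP Iall okA_def) }
      moreover
      { fix r0 assume r0: "r0 \<in> set (snd Q)" "r = aux_rule r0"
        have bb: "\<forall>b\<in>set (body r0). sat_atom M \<sigma> b" using b r0 by (simp add: aux_rule_def sren)
        have saux: "sat_atom I \<sigma> (aux_atom (head r0))" using b r0 by (simp add: aux_rule_def)
        then have "apred (head r0) = fst Q" "map (eval_trm \<sigma>) (aargs (head r0)) = map cval a"
          by (auto simp: sat_aux Iaux split: if_splits)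
        then have "sat_atom M \<sigma> (head r0) \<Longrightarrow> False" using nav by (simp add: sat_atom_def)
        then have ?thesis using mr[OF r0(1) bb] by blast }
      ultimately show ?thesis using r by (auto simp: progQ_def)
    qed
  next
    fix x \<sigma> assume x: "x \<in> set (dD Q D a)"
    then show "sat_atom I \<sigma> x"
    proof (auto simp: dD_def)
      fix d assume "d \<in> set D" then show "sat_atom I \<sigma> (ren_atom d)" using mf sren by blast
    next
      show "sat_atom I \<sigma> (Atom (aux_pred (fst Q)) (map const_trm a))"
        by (simp add: sat_atom_def Iaux comp_def)
    qed
  qed
  moreover have "\<not> sat_atom I \<sigma>0 (Atom gP [TC 0])" by (simp add: sat_atom_def IgP)
  ultimately show ?thesis unfolding entails_def by blast
qed

lemma notG:
  assumes "os \<noteq> []" and "\<forall>x\<in>set X. apred x \<noteq> gP"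
  shows "\<not> entails (prog_with_data (progQ Q) X) (Atom gP (map OC os @ [TC 0]))"
proof -
  define I where "I p = (if p = gP then {[VT t] | t. True} else UNIV)" for p
  have "is_model I (prog_with_data (progQ Q) X)"
    using assms(2) unfolding is_model_def pwd by (auto simp: progQ_def I_def sat_atom_def
      ren_rule_def ren_atom_def aux_rule_def okA_def fixed_def fact_rule_def)
  moreover have "\<not> sat_atom I (undefined) (Atom gP (map OC os @ [TC 0]))"
    using assms(1) by (auto simp: I_def sat_atom_def)
  ultimately show ?thesis unfolding entails_def by blast
qed

lemma yesG:
  assumes "s \<ge> 0"
  shows "entails (prog_with_data (progQ Q) (X @ [Atom eP [TC s]])) (Atom gP [TC 0])"
  unfolding entails_def
proof (intro allI impI)
  fix I \<sigma> assume mod: "is_model I (prog_with_data (progQ Q) (X @ [Atom eP [TC s]]))"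
  have mfix: "is_model I (set fixed)" using mod unfolding is_model_def pwd by (auto simp: progQ_def)
  from mod have "\<forall>\<sigma>. (\<forall>b\<in>set (body (fact_rule (Atom eP [TC s]))). sat_atom I \<sigma> b) \<longrightarrow> sat_atom I \<sigma> (head (fact_rule (Atom eP [TC s])))"
    unfolding is_model_def pwd by auto
  then have "[VT s] \<in> I eP" by (simp add: fact_rule_def sat_atom_def)
  then have g: "[VT s] \<in> I gP" using fixed_sat(5)[OF mfix] by blast
  have "[VT (s - int n)] \<in> I gP" for n
  proof (induct n)
    case 0 then show ?case using g by simp
  next
    case (Suc n) then show ?case using fixed_sat(6)[OF mfix, of "s - int (Suc n)"] by simp
  qed
  from this[of "nat s"] show "sat_atom I \<sigma> (Atom gP [TC 0])" using assms by (simp add: sat_atom_def)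
qed

lemma answers_char:
  assumes "\<forall>x\<in>set X. apred x \<noteq> gP"
  shows "answers (qQ Q) X 0 = (if entails (prog_with_data (progQ Q) X) (Atom gP [TC 0]) then {[]} else {})"
proof -
  have n: "\<And>os. os \<noteq> [] \<Longrightarrow> \<not> entails (prog_with_data (progQ Q) X) (Atom gP (map OC os @ [TC 0]))"
    by (rule notG[OF _ assms])
  show ?thesis
    apply (auto simp: answers_def qQ_def)
    using n apply blast
    apply (case_tac "x = []") using n by auto
qed

lemma ser_mem: "x \<in> set xs \<Longrightarrow> length (ser x) < length (ser (Node xs))"
proof -
  assume "x \<in> set xs"
  then have "length (ser x) \<le> sum_list (map (length \<circ> ser) xs)"
    by (intro member_le_sum_list) auto
  then show ?thesis by (simp add: length_concat)
qed

lemma ser_mem': "y = Node xs \<Longrightarrow> x \<in> set xs \<Longrightarrow> length (ser x) < length (ser y)"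
  using ser_mem by blast

lemma bin_bound: "n < 2 ^ length (bin n)"
proof (induct n rule: bin.induct)
  case (1 n)
  show ?case
  proof (cases "n = 0")
    case True then show ?thesis by (simp add: bin.simps)
  next
    case False
    then have "n div 2 < 2 ^ length (bin (n div 2))" using 1 by simp
    then have "n < 2 * 2 ^ length (bin (n div 2))" by linarith
    then show ?thesis using False by (subst bin.simps) simp
  qed
qed

lemma len_leaf: "length (bin n) < length (ser (Leaf n))" by simp

lemma enc_qe_expand: "enc_qe (Q, D, a) = ser (Node [enc_query Q, enc_dataset D, Node (map enc_const a)])"
  by (simp add: enc_qe_def)

lemma time_bound_D:
  assumes "d \<in> set D" "TC t \<in> set (aargs d)"
  shows "\<bar>t\<bar> < 2 ^ length (enc_qe (Q, D, a))"
proof -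
  obtain p ts where d: "d = Atom p ts" by (cases d)
  have "length (bin (nat \<bar>t\<bar>)) < length (ser (Leaf (nat \<bar>t\<bar>)))" by simp
  also have "\<dots> < length (ser (enc_int t))" by (rule ser_mem') (auto simp: enc_int_def)
  also have "\<dots> < length (ser (enc_trm (TC t)))" by (rule ser_mem'[where xs="[Leaf 2, enc_int t]"]) auto
  also have "\<dots> < length (ser (Node (map enc_trm ts)))"
    by (rule ser_mem) (use assms d in \<open>metis enc_trm.simps(3) imageI list.set_map aargs_def atom.sel(2)\<close>)
  also have "\<dots> < length (ser (enc_atom d))" by (rule ser_mem'[where xs="[enc_pred p, Node (map enc_trm ts)]"]) (auto simp: d)
  also have "\<dots> < length (ser (enc_dataset D))" unfolding enc_dataset_def by (rule ser_mem) (use assms in simp)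
  also have "\<dots> < length (enc_qe (Q, D, a))" unfolding enc_qe_expand by (rule ser_mem) simp
  finally have "nat \<bar>t\<bar> < 2 ^ length (enc_qe (Q, D, a))"
    using bin_bound[of "nat \<bar>t\<bar>"] by (meson less_trans power_strict_increasing_iff one_less_numeral_iff semiring_norm(76))
  then show ?thesis by (metis nat_less_iff abs_ge_zero of_nat_numeral of_nat_power)
qed

lemma time_bound_a:
  assumes "CT t \<in> set a"
  shows "\<bar>t\<bar> < 2 ^ length (enc_qe (Q, D, a))"
proof -
  have "length (bin (nat \<bar>t\<bar>)) < length (ser (Leaf (nat \<bar>t\<bar>)))" by simp
  also have "\<dots> < length (ser (enc_int t))" by (rule ser_mem') (auto simp: enc_int_def)
  also have "\<dots> < length (ser (enc_const (CT t)))" by (rule ser_mem'[where xs="[Leaf 1, enc_int t]"]) auto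
  also have "\<dots> < length (ser (Node (map enc_const a)))"
    by (rule ser_mem) (use assms in \<open>metis enc_const.simps(2) imageI list.set_map\<close>)
  also have "\<dots> < length (enc_qe (Q, D, a))" unfolding enc_qe_expand by (rule ser_mem) simp
  finally have "nat \<bar>t\<bar> < 2 ^ length (enc_qe (Q, D, a))"
    using bin_bound[of "nat \<bar>t\<bar>"] by (meson less_trans power_strict_increasing_iff one_less_numeral_iff semiring_norm(76))
  then show ?thesis by (metis nat_less_iff abs_ge_zero of_nat_numeral of_nat_power)
qed

lemma fact_time:
  assumes "is_fact x" "temporal (apred x)"
  shows "\<exists>t. atom_time x = Some t \<and> TC t \<in> set (aargs x)"
proof -
  have w: "map trm_sort (aargs x) = psorts (apred x)" and nv: "atom_vars x = {}"
    using assms(1) by (auto simp: is_fact_def wf_atom_def)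
  have ne: "psorts (apred x) \<noteq> []" and ls: "last (psorts (apred x)) = STime"
    using assms(2) by (auto simp: temporal_def)
  then have ne2: "aargs x \<noteq> []" using w by auto
  have "trm_sort (last (aargs x)) = STime" using w ls ne2 by (metis last_map)
  moreover have "trm_vars (last (aargs x)) = {}" using nv ne2 by (auto simp: atom_vars_def)
  ultimately obtain t where l: "last (aargs x) = TC t" by (cases "last (aargs x)") auto
  have "atom_time x = Some t" using ne2 l by (cases "aargs x") (auto simp: atom_time_def)
  moreover have "TC t \<in> set (aargs x)" using l ne2 by (metis last_in_set)
  ultimately show ?thesis by blast
qed

lemma wf_atom_ren[simp]: "wf_atom (ren_atom x) = wf_atom x"
  by (simp add: wf_atom_def ren_atom_def ren_pred_def rigid_def temporal_def)
lemma wf_atom_aux[simp]: "wf_atom (aux_atom x) = wf_atom x"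
  by (simp add: wf_atom_def aux_atom_def aux_pred_def rigid_def temporal_def)
lemma vars_ren[simp]: "atom_vars (ren_atom x) = atom_vars x" by (simp add: atom_vars_def ren_atom_def)
lemma vars_aux[simp]: "atom_vars (aux_atom x) = atom_vars x" by (simp add: atom_vars_def aux_atom_def)
lemma apred_ren[simp]: "apred (ren_atom x) = ren_pred (apred x)" by (simp add: ren_atom_def)
lemma aargs_ren[simp]: "aargs (ren_atom x) = aargs x" by (simp add: ren_atom_def)
lemma apred_aux[simp]: "apred (aux_atom x) = aux_pred (apred x)" by (simp add: aux_atom_def)
lemma aargs_aux[simp]: "aargs (aux_atom x) = aargs x" by (simp add: aux_atom_def)
lemma pidb_ren[simp]: "pidb (ren_pred p) = pidb p" by (simp add: ren_pred_def)
lemma pidb_aux[simp]: "pidb (aux_pred p) = (\<not> pidb p)" by (simp add: aux_pred_def)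
lemma psorts_aux[simp]: "psorts (aux_pred p) = psorts p" by (simp add: aux_pred_def)
lemma psorts_ren[simp]: "psorts (ren_pred p) = psorts p" by (simp add: ren_pred_def)
lemma rigid_ren[simp]: "rigid (ren_pred p) = rigid p" by (simp add: rigid_def)
lemma temporal_ren[simp]: "temporal (ren_pred p) = temporal p" by (simp add: temporal_def)
lemma rigid_aux[simp]: "rigid (aux_pred p) = rigid p" by (simp add: rigid_def)
lemma temporal_aux[simp]: "temporal (aux_pred p) = temporal p" by (simp add: temporal_def)

lemma wf_ren_rule: "wf_rule r \<Longrightarrow> wf_rule (ren_rule r)"
  by (auto simp: wf_rule_def ren_rule_def)
lemma wf_aux_rule: "wf_rule r \<Longrightarrow> wf_rule (aux_rule r)"
proof -
  have "wf_atom okA" "atom_vars okA = {}" by (auto simp: okA_def okP_def wf_atom_def rigid_def atom_vars_def)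
  then show "wf_rule r \<Longrightarrow> wf_rule (aux_rule r)" by (auto simp: wf_rule_def aux_rule_def okA_def okP_def)
qed
lemma wf_fixed: "r \<in> set fixed \<Longrightarrow> wf_rule r"
  by (auto simp: fixed_def wf_rule_def wf_atom_def rigid_def temporal_def atom_vars_def allP_def gP_def
    eP_def okA_def okP_def)

lemma wf_progQ: "wf_program (snd Q) \<Longrightarrow> wf_program (progQ Q)"
  by (auto simp: wf_program_def progQ_def intro: wf_ren_rule wf_aux_rule wf_fixed)

lemma tin_nonneg: "tin I \<ge> 0" by (simp add: tin_def)



lemma dtp_inst:
  assumes inst: "qe_instance (Q, D, a)"
  shows "dtp_instance (phi (Q, D, a))"
proof -
  have q: "is_query Q" and dsD: "is_dataset D" and srt: "map (trm_sort \<circ> const_trm) a = psorts (fst Q)"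
    using inst by (auto simp: qe_instance_def)
  have wfq: "wf_program (snd Q)" using q by (simp add: is_query_def)
  have tq: "is_temporal_query (qQ Q)"
  proof -
    have r4: "Rule [okA, Atom allP [TV 0 0]] (Atom gP [TV 0 0]) \<in> set (progQ Q)"
      by (simp add: progQ_def fixed_def)
    have "gP \<in> preds_of (progQ Q)" unfolding preds_of_def
      by (rule UN_I[OF r4]) simp
    moreover have "temporal gP" "pidb gP" by (simp_all add: gP_def temporal_def)
    ultimately show ?thesis using wf_progQ[OF wfq]
      by (simp add: is_temporal_query_def is_query_def qQ_def)
  qed
  have Pin: "fst Q \<in> preds_of (snd Q)" using q by (simp add: is_query_def)
  have Prt: "rigid (fst Q) \<or> temporal (fst Q)"
  proof -
    from Pin obtain r where r: "r \<in> set (snd Q)" and "fst Q \<in> apred ` (set (body r) \<union> {head r})"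
      unfolding preds_of_def by (rule UN_E)
    then obtain x where x: "x \<in> set (body r) \<union> {head r}" and px: "apred x = fst Q" by (metis imageE)
    have "wf_rule r" using wfq r unfolding wf_program_def by blast
    then have "wf_atom x" using x unfolding wf_rule_def by auto
    then show ?thesis using px unfolding wf_atom_def by simp
  qed
  have fa: "is_fact (Atom (aux_pred (fst Q)) (map const_trm a))"
  proof -
    have "trm_vars (const_trm c) = {}" for c by (cases c) auto
    then have "atom_vars (Atom (aux_pred (fst Q)) (map const_trm a)) = {}" by (simp add: atom_vars_def)
    moreover have "wf_atom (Atom (aux_pred (fst Q)) (map const_trm a))"
      using srt Prt unfolding wf_atom_def by simp
    ultimately show ?thesis by (simp add: is_fact_def)
  qed
  have fD: "is_fact (ren_atom d) \<and> \<not> pidb (apred (ren_atom d))" if "d \<in> set D" for d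
    using dsD that unfolding is_dataset_def is_fact_def by simp
  have ds: "is_dataset (dD Q D a)"
    unfolding is_dataset_def using fa fD q unfolding dD_def is_query_def by auto
  have tm: "rigid (apred x) \<or> temporal (apred x) \<and> (\<exists>t. atom_time x = Some t \<and> t \<le> tin (Q, D, a))"
    if x: "x \<in> set (dD Q D a)" for x
  proof -
    have fx: "is_fact x" using ds x by (simp add: is_dataset_def)
    then have rt: "rigid (apred x) \<or> temporal (apred x)" by (simp add: is_fact_def wf_atom_def)
    show ?thesis
    proof (cases "rigid (apred x)")
      case True then show ?thesis by simp
    next
      case False
      then have tx: "temporal (apred x)" using rt by simp
      obtain t where t: "atom_time x = Some t" "TC t \<in> set (aargs x)" using fact_time[OF fx tx] by blast
      have "\<bar>t\<bar> < 2 ^ length (enc_qe (Q, D, a))"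
      proof (cases "x \<in> set (map ren_atom D)")
        case True
        then obtain d where d: "d \<in> set D" "x = ren_atom d" by auto
        then show ?thesis using time_bound_D[OF d(1)] t by simp
      next
        case False
        then have "x = Atom (aux_pred (fst Q)) (map const_trm a)" using x by (simp add: dD_def)
        then obtain c where c: "c \<in> set a" "const_trm c = TC t" using t by auto
        have "c = CT t" using c(2) by (cases c) auto
        then show ?thesis using time_bound_a c by simp
      qed
      then have "t \<le> tin (Q, D, a)" by (simp add: tin_def)
      then show ?thesis using tx t by blast
    qed
  qed
  have hist: "is_history (tin (Q, D, a)) (dD Q D a)"
    unfolding is_history_def using ds tm by blast
  show ?thesis using tq hist tin_nonneg by (simp add: dtp_instance_def phi_def)
qed

lemma dtp_equiv:
  assumes inst: "qe_instance (Q, D, a)"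
  shows "dtp_holds (phi (Q, D, a)) = qe_holds (Q, D, a)"
proof -
  define \<tau> where "\<tau> = tin (Q, D, a)"
  have pg: "pidb gP" by (simp add: gP_def)
  have ng: "\<forall>x\<in>set (dD Q D a). apred x \<noteq> gP" by (auto simp: dD_def)
  have ngU: "\<forall>x\<in>set (dD Q D a @ U). apred x \<noteq> gP" if "is_update \<tau> U" for U
    using that ng pg by (auto simp: is_update_def is_dataset_def)
  have dh: "dtp_holds (phi (Q, D, a)) = (\<forall>U. is_update \<tau> U \<longrightarrow> answers (qQ Q) (dD Q D a) 0 = answers (qQ Q) (dD Q D a @ U) 0)"
    by (simp add: dtp_holds_def phi_def \<tau>_def)
  show ?thesis
  proof (cases "qe_holds (Q, D, a)")
    case True
    have "answers (qQ Q) (dD Q D a) 0 = answers (qQ Q) (dD Q D a @ U) 0" if "is_update \<tau> U" for U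
      using answers_char[OF ng] answers_char[OF ngU[OF that]] qe_yes[OF inst True, of U] qe_yes[OF inst True, of "[]"]
      by simp
    then show ?thesis using True dh by blast
  next
    case False
    define U where "U = [Atom eP [TC (\<tau> + 1)]]"
    have upd: "is_update \<tau> U"
      by (simp add: U_def is_update_def is_dataset_def is_fact_def wf_atom_def eP_def temporal_def
          atom_vars_def atom_time_def)
    have "answers (qQ Q) (dD Q D a) 0 = {}"
      using answers_char[OF ng] qe_no[OF inst False] by simp
    moreover have "answers (qQ Q) (dD Q D a @ U) 0 = {[]}"
      using answers_char[OF ngU[OF upd]] yesG[of "\<tau> + 1"] tin_nonneg[of "(Q, D, a)"]
      by (simp add: U_def \<tau>_def)
    ultimately show ?thesis using False dh upd by auto
  qed
qed

lemma phi_fst: "fst (phi (Q, D, a)) = qQ Q" by (simp add: phi_def)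



datatype ctx = XA5 | XA7 | XB5 | XB9
datatype ctx2 = YB | YC
datatype gst = Start | A0 | A1 | A2 | A3 | A4 | A5 | A6 | A7
  | RA0 ctx | RA1 ctx | RA2 ctx | RA3 ctx | RA4 ctx | RA5 ctx | RA6 ctx
  | B0 | B1 | B2 | B3 | B4 | B5 | B6 | B7 | BQ | B8 | B9 | XO | XT0 | XT1
  | XP0 ctx2 | XP1 ctx2 | XP2 ctx2 | XP3 ctx2 | XP4 ctx2 | XP5 ctx2 | XP6 ctx2
  | C0 | C1 | C2 | C4 | C5 | C6 | C7 | C8 | C8b | C10 | C9
  | D0 | RWB | RWC | RWD
datatype mst = G gst | Opq bool gst nat bool

type_synonym mres = "mst option \<times> int \<times> sym list"

definition bad :: mres where "bad = (None, 0, [])"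

fun retc :: "ctx \<Rightarrow> gst" where
  "retc XA5 = A5" | "retc XA7 = A7" | "retc XB5 = B5" | "retc XB9 = B9"

abbreviation "sO \<equiv> SOpen"
abbreviation "sC \<equiv> SClose"
abbreviation "sL \<equiv> SLeaf"
abbreviation "sE \<equiv> SEnd"

definition mv :: "gst \<Rightarrow> sym list \<Rightarrow> mres" where "mv g os = (Some (G g), 1, os)"
definition mvo :: "mst \<Rightarrow> sym list \<Rightarrow> mres" where "mvo s os = (Some s, 1, os)"

fun gstep :: "gst \<Rightarrow> sym option \<Rightarrow> mres" where
  "gstep Start a = (if a = None then mv A0 [] else bad)"
| "gstep A0 a = (if a = Some sO then mv A1 ([sO, sO] @ ser (enc_pred gP) @ [sO]) else bad)"
| "gstep A1 a = (if a = Some sO then mvo (Opq False A2 0 False) [] else bad)"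
| "gstep A2 a = (if a = Some sO then mv A3 [] else bad)"
| "gstep A3 a = (if a = Some sO then mv A4 [sO] else if a = Some sC then (Some (G RWB), -1, concat (map (ser \<circ> enc_rule) fixed)) else bad)"
| "gstep A4 a = (if a = Some sO then mv A5 [sO] else bad)"
| "gstep A5 a = (if a = Some sO then mv (RA0 XA5) [sO] else if a = Some sC then mv A6 [sC] else bad)"
| "gstep A6 a = (if a = Some sO then mv (RA0 XA7) [sO] else bad)"
| "gstep A7 a = (if a = Some sC then mv A3 [sC] else bad)"
| "gstep (RA0 c) a = (if a = Some sO then mv (RA1 c) [sO] else bad)"
| "gstep (RA1 c) a = (if a = Some sL then mv (RA2 c) [sL] else bad)"
| "gstep (RA2 c) a = (if a = Some S0 then mv (RA2 c) [S0] else if a = Some S1 then mv (RA2 c) [S1]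
     else if a = Some sE then mvo (Opq True (RA3 c) 0 False) [S1, S0, sE] else bad)"
| "gstep (RA3 c) a = (if a = Some sO then mvo (Opq True (RA4 c) 1 False) [sO] else bad)"
| "gstep (RA4 c) a = (if a = Some sC then mv (RA5 c) [sC] else bad)"
| "gstep (RA5 c) a = (if a = Some sO then mvo (Opq True (RA6 c) 1 False) [sO] else bad)"
| "gstep (RA6 c) a = (if a = Some sC then mv (retc c) [sC] else bad)"
| "gstep B0 a = (if a = Some sO then mv B1 [] else bad)"
| "gstep B1 a = (if a = Some sO then mvo (Opq False B2 0 False) [] else bad)"
| "gstep B2 a = (if a = Some sO then mv B3 [] else bad)"
| "gstep B3 a = (if a = Some sO then mv B4 [sO] else if a = Some sC then mv BQ [sC, sC] else bad)"
| "gstep B4 a = (if a = Some sO then mv B5 [sO] else bad)"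
| "gstep B5 a = (if a = Some sO then mv (RA0 XB5) [sO] else if a = Some sC then mv B6 [] else bad)"
| "gstep B6 a = (if a = Some sO then mv XO [sO] else bad)"
| "gstep XO a = (if a = Some sO then mv (XP0 YB) [sO] else bad)"
| "gstep (XP0 y) a = (if a = Some sL then mv (XP1 y) [sL] else bad)"
| "gstep (XP1 y) a = (if a = Some S0 then mv (XP1 y) [S0] else if a = Some S1 then mv (XP1 y) [S1]
     else if a = Some sE then mv (XP2 y) [S1, sE] else bad)"
| "gstep (XP2 y) a = (if a = Some sL then mv (XP3 y) [sL] else bad)"
| "gstep (XP3 y) a = (if a = Some sE then mv (XP5 y) [S1, sE] else if a = Some S1 then mv (XP4 y) [] else bad)"
| "gstep (XP4 y) a = (if a = Some sE then mv (XP5 y) [sE] else bad)"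
| "gstep (XP5 y) a = (if a = Some sO then mvo (Opq True (XP6 y) 1 False) [sO] else bad)"
| "gstep (XP6 y) a = (if a = Some sC then (if y = YB then mv XT0 [sC] else mvo (Opq False C4 0 False) [sC, sO]) else bad)"
| "gstep XT0 a = (if a = Some sO then mvo (Opq True XT1 1 False) [sO] else bad)"
| "gstep XT1 a = (if a = Some sC then mv B7 [sC] else bad)"
| "gstep B7 a = (if a = Some sC then mv B3 ([sC] @ ser (enc_atom okA) @ [sC]) else bad)"
| "gstep BQ a = (if a = Some sC then mv B8 [] else bad)"
| "gstep B8 a = (if a = Some sO then mv B9 [sO] else bad)"
| "gstep B9 a = (if a = Some sO then mv (RA0 XB9) [sO] else if a = Some sC then (Some (G RWC), -1, []) else bad)"
| "gstep C0 a = (if a = Some sO then mv C1 [] else bad)"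
| "gstep C1 a = (if a = Some sO then mv C2 [] else bad)"
| "gstep C2 a = (if a = Some sO then mv (XP0 YC) [sO, sO] else bad)"
| "gstep C4 a = (if a = Some sC then mvo (Opq False C5 0 False) [] else bad)"
| "gstep C5 a = (if a = Some sO then mv C6 [] else bad)"
| "gstep C6 a = (if a = Some sO then mv C7 [sO] else if a = Some sC then mv C9 [sC, sC, sC] else bad)"
| "gstep C7 a = (if a = Some sL then mv C8 [sL] else bad)"
| "gstep C8 a = (if a = Some sE then mvo (Opq True C10 0 False) [sE] else if a = Some S1 then mv C8b [S1, S0] else bad)"
| "gstep C8b a = (if a = Some sE then mvo (Opq True C10 0 False) [sE] else bad)"
| "gstep C10 a = (if a = Some sC then mv C6 [sC] else bad)"
| "gstep C9 a = (if a = Some sC then (Some (G RWD), -1, [sO, sL, sE, sL]) else bad)"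
| "gstep D0 a = (if a = None then (None, 0, [sE, sC, sO, sL, sE, sL, sE, sC, sC]) else mv D0 [S1])"
| "gstep RWB a = (if a = None then mv B0 [] else (Some (G RWB), -1, []))"
| "gstep RWC a = (if a = None then mv C0 [] else (Some (G RWC), -1, []))"
| "gstep RWD a = (if a = None then mv D0 [] else (Some (G RWD), -1, []))"

definition outs :: "bool \<Rightarrow> sym list \<Rightarrow> sym list" where "outs m xs = (if m then xs else [])"

fun mstep :: "mst \<Rightarrow> sym option \<Rightarrow> mres" where
  "mstep (G g) a = gstep g a"
| "mstep (Opq m r k b) a = (case a of None \<Rightarrow> bad | Some x \<Rightarrow>
     (if \<not> b then (if x = sL then (Some (Opq m r k True), 1, outs m [x])
       else if x = sO then (Some (Opq m r (Suc k) False), 1, outs m [x])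
       else if x = sC then (Some (if k \<le> 1 then G r else Opq m r (k - 1) False), 1, outs m [x]) else bad)
     else (if x = S0 \<or> x = S1 then (Some (Opq m r k True), 1, outs m [x])
       else if x = sE then (Some (if k = 0 then G r else Opq m r k False), 1, outs m [x]) else bad)))"

definition KK :: nat where "KK = 10"
definition Lmax :: nat where "Lmax = 1000"

fun validst :: "mst \<Rightarrow> bool" where
  "validst (G g) = True" | "validst (Opq m r k b) = (k \<le> KK)"

fun mrun :: "mst \<Rightarrow> sym list \<Rightarrow> (mst \<times> sym list) option" where
  "mrun s [] = (if validst s then Some (s, []) else None)"
| "mrun s (x # xs) = (if validst s then
     (case mstep s (Some x) of (Some s1, d, o1) \<Rightarrow>
        if d = 1 \<and> length o1 \<le> Lmax then
          (case mrun s1 xs of None \<Rightarrow> None | Some (s2, o2) \<Rightarrow> Some (s2, o1 @ o2))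
        else None
      | (None, _) \<Rightarrow> None) else None)"

lemma mrun_append: "mrun s (xs @ ys) = (case mrun s xs of None \<Rightarrow> None
   | Some (s1, o1) \<Rightarrow> (case mrun s1 ys of None \<Rightarrow> None | Some (s2, o2) \<Rightarrow> Some (s2, o1 @ o2)))"
proof (induct xs arbitrary: s)
  case Nil
  show ?case
  proof (cases "validst s")
    case True then show ?thesis by (simp split: option.split)
  next
    case False then show ?thesis by (cases ys) auto
  qed
next
  case (Cons x xs)
  then show ?case by (auto split: option.split prod.split)
qed

lemma test: "mrun (G A0) [sO, sO] = Some (Opq False A2 0 False, [sO, sO] @ ser (enc_pred gP) @ [sO])"
  by (simp add: mv_def mvo_def gP_def bin.simps Lmax_def KK_def)



declare comp_assoc[simp] KK_def[simp] Lmax_def[simp] mv_def[simp] mvo_def[simp] bad_def[simp] outs_def[simp]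

lemma set_bin: "set (bin n) \<subseteq> {S0, S1}"
proof (induct n rule: bin.induct)
  case (1 n) then show ?case by (subst bin.simps) auto
qed

lemma bin0[simp]: "bin 0 = []" by (simp add: bin.simps)
lemma bin_odd[simp]: "bin (2 * n + 1) = bin n @ [S1]" by (subst bin.simps) simp
lemma bin_odd'[simp]: "bin (Suc (2 * n)) = bin n @ [S1]" using bin_odd by simp
lemma bin_42[simp]: "bin (4 * n + 2) = bin n @ [S1, S0]"
proof -
  have "bin (4 * n + 2) = bin (2 * n + 1) @ [S0]" by (subst bin.simps) simp
  then show ?thesis by simp
qed
lemma bin_42'[simp]: "bin (Suc (Suc (4 * n))) = bin n @ [S1, S0]" using bin_42 by simp
lemma bin1[simp]: "bin 1 = [S1]" using bin_odd[of 0] by simp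
lemma binS0[simp]: "bin (Suc 0) = [S1]" by (simp add: bin.simps)
lemma bin2[simp]: "bin 2 = [S1, S0]" by (simp add: bin.simps)
lemma bin4[simp]: "bin 4 = [S1, S0, S0]" by (simp add: bin.simps)

lemma opq_bits: "k \<le> KK \<Longrightarrow> set xs \<subseteq> {S0, S1} \<Longrightarrow> mrun (Opq m r k True) xs = Some (Opq m r k True, outs m xs)"
  by (induct xs) auto

lemma opq_bin[simp]: "k \<le> KK \<Longrightarrow> mrun (Opq m r k True) (bin n) = Some (Opq m r k True, outs m (bin n))"
  using opq_bits set_bin by blast

lemma gbits: "gstep g (Some S0) = mv g [S0] \<Longrightarrow> gstep g (Some S1) = mv g [S1] \<Longrightarrow> set xs \<subseteq> {S0, S1} \<Longrightarrow>
  mrun (G g) xs = Some (G g, xs)"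
  by (induct xs) auto

lemma RA2_bin[simp]: "mrun (G (RA2 c)) (bin n) = Some (G (RA2 c), bin n)"
  by (rule gbits) (simp_all add: set_bin)
lemma XP1_bin[simp]: "mrun (G (XP1 y)) (bin n) = Some (G (XP1 y), bin n)"
  by (rule gbits) (simp_all add: set_bin)

lemma mrun_D0: "mrun (G D0) xs = Some (G D0, replicate (length xs) S1)"
  by (induct xs) auto

fun dle :: "nat \<Rightarrow> sexp \<Rightarrow> bool" where
  "dle k (Leaf n) = True"
| "dle k (Node xs) = (0 < k \<and> list_all (dle (k - 1)) xs)"

lemma outs_app[simp]: "outs m (xs @ ys) = outs m xs @ outs m ys" by simp

lemma opq_ser: "\<And>k. 1 \<le> k \<Longrightarrow> k \<le> KK \<Longrightarrow> dle (KK - k) x \<Longrightarrow>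
   mrun (Opq m r k False) (ser x) = Some (Opq m r k False, outs m (ser x))"
proof (induct x)
  case (Leaf n)
  then show ?case by (simp add: mrun_append)
next
  case (Node xs)
  have lst: "mrun (Opq m r (Suc k) False) (concat (map ser ys)) = Some (Opq m r (Suc k) False, outs m (concat (map ser ys)))"
    if "set ys \<subseteq> set xs" for ys
    using that
  proof (induct ys)
    case Nil then show ?case using Node.prems by simp
  next
    case (Cons y ys)
    have "mrun (Opq m r (Suc k) False) (ser y) = Some (Opq m r (Suc k) False, outs m (ser y))"
      using Node.hyps[of y "Suc k"] Cons.prems Node.prems by (auto simp: list_all_iff)
    then show ?case using Cons by (simp add: mrun_append del: outs_def)
  qed
  show ?case using lst[of xs] Node.prems by (simp add: mrun_append del: outs_def) simp
qed

lemma opq_list: "1 \<le> k \<Longrightarrow> k \<le> KK \<Longrightarrow> \<forall>y\<in>set ys. dle (KK - k) (f y) \<Longrightarrow>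
   mrun (Opq m r k False) (concat (map (ser \<circ> f) ys)) = Some (Opq m r k False, outs m (concat (map (ser \<circ> f) ys)))"
proof (induct ys)
  case Nil then show ?case by simp
next
  case (Cons y ys)
  then show ?case using opq_ser[of k "f y" m r] by (simp add: mrun_append del: outs_def)
qed

lemma opq_top: "dle KK x \<Longrightarrow> mrun (Opq m r 0 False) (ser x) = Some (G r, outs m (ser x))"
proof (cases x)
  case (Leaf n) then show ?thesis by (simp add: mrun_append)
next
  case (Node xs)
  assume d: "dle KK x"
  have "mrun (Opq m r 1 False) (concat (map (ser \<circ> id) xs)) = Some (Opq m r 1 False, outs m (concat (map (ser \<circ> id) xs)))"
    by (rule opq_list) (use d Node in \<open>auto simp: list_all_iff\<close>)
  then show ?thesis using Node by (simp add: mrun_append del: outs_def) simp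
qed

lemma dle_mono: "dle k x \<Longrightarrow> k \<le> k' \<Longrightarrow> dle k' x"
proof (induct x arbitrary: k k')
  case (Leaf n) then show ?case by simp
next
  case (Node xs) then show ?case by (auto simp: list_all_iff)
qed

lemma dle_int[simp]: "1 \<le> k \<Longrightarrow> dle k (enc_int t)" by (simp add: enc_int_def)
lemma dle_sort[simp]: "dle k (enc_sort s)" by (cases s) auto
lemma dle_trm[simp]: "2 \<le> k \<Longrightarrow> dle k (enc_trm t)" by (cases t) auto
lemma dle_pred[simp]: "2 \<le> k \<Longrightarrow> dle k (enc_pred p)" by (cases p) (auto simp: list_all_iff)
lemma dle_atom[simp]: "4 \<le> k \<Longrightarrow> dle k (enc_atom a)" by (cases a) (auto simp: list_all_iff)
lemma dle_rule[simp]: "6 \<le> k \<Longrightarrow> dle k (enc_rule r)" by (cases r) (auto simp: list_all_iff)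
lemma dle_const[simp]: "2 \<le> k \<Longrightarrow> dle k (enc_const c)" by (cases c) auto

lemmas opq_simps = opq_list opq_top

lemma atomA5: "mrun (G A5) (ser (enc_atom x)) = Some (G A5, ser (enc_atom (ren_atom x)))"
proof (cases x)
  case (Atom p ts)
  then show ?thesis by (cases p) (simp add: mrun_append opq_simps ren_atom_def ren_pred_def)
qed

lemma atomA6: "mrun (G A6) (ser (enc_atom x)) = Some (G A7, ser (enc_atom (ren_atom x)))"
proof (cases x)
  case (Atom p ts)
  then show ?thesis by (cases p) (simp add: mrun_append opq_simps ren_atom_def ren_pred_def)
qed
lemma atomB5: "mrun (G B5) (ser (enc_atom x)) = Some (G B5, ser (enc_atom (ren_atom x)))"
proof (cases x)
  case (Atom p ts)
  then show ?thesis by (cases p) (simp add: mrun_append opq_simps ren_atom_def ren_pred_def)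
qed
lemma atomB9: "mrun (G B9) (ser (enc_atom x)) = Some (G B9, ser (enc_atom (ren_atom x)))"
proof (cases x)
  case (Atom p ts)
  then show ?thesis by (cases p) (simp add: mrun_append opq_simps ren_atom_def ren_pred_def)
qed
lemma atomB6: "mrun (G B6) (ser (enc_atom x)) = Some (G B7, ser (enc_atom (aux_atom x)))"
proof (cases x)
  case (Atom p ts)
  then show ?thesis by (cases p) (simp add: mrun_append opq_simps aux_atom_def aux_pred_def)
qed

lemma atomsA5: "mrun (G A5) (concat (map (ser \<circ> enc_atom) bs)) = Some (G A5, concat (map (ser \<circ> enc_atom) (map ren_atom bs)))"
  by (induct bs) (simp_all add: mrun_append atomA5)
lemma atomsB5: "mrun (G B5) (concat (map (ser \<circ> enc_atom) bs)) = Some (G B5, concat (map (ser \<circ> enc_atom) (map ren_atom bs)))"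
  by (induct bs) (simp_all add: mrun_append atomB5)
lemma atomsB9: "mrun (G B9) (concat (map (ser \<circ> enc_atom) bs)) = Some (G B9, concat (map (ser \<circ> enc_atom) (map ren_atom bs)))"
  by (induct bs) (simp_all add: mrun_append atomB9)

lemma ruleA: "mrun (G A3) (ser (enc_rule r)) = Some (G A3, ser (enc_rule (ren_rule r)))"
  by (cases r) (simp add: mrun_append atomsA5 atomA6 ren_rule_def)
lemma ruleB: "mrun (G B3) (ser (enc_rule r)) = Some (G B3, ser (enc_rule (aux_rule r)))"
  by (cases r) (simp add: mrun_append atomsB5 atomB6 aux_rule_def okA_def okP_def)
lemma rulesA: "mrun (G A3) (concat (map (ser \<circ> enc_rule) R)) = Some (G A3, concat (map (ser \<circ> enc_rule) (map ren_rule R)))"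
  by (induct R) (simp_all add: mrun_append ruleA)
lemma rulesB: "mrun (G B3) (concat (map (ser \<circ> enc_rule) R)) = Some (G B3, concat (map (ser \<circ> enc_rule) (map aux_rule R)))"
  by (induct R) (simp_all add: mrun_append ruleB)

lemma constC: "mrun (G C6) (ser (enc_const c)) = Some (G C6, ser (enc_trm (const_trm c)))"
  by (cases c) (simp_all add: mrun_append opq_simps enc_int_def)
lemma constsC: "mrun (G C6) (concat (map (ser \<circ> enc_const) a)) = Some (G C6, concat (map (ser \<circ> enc_trm) (map const_trm a)))"
  by (induct a) (simp_all add: mrun_append constC)

lemma passA: "mrun (G A0) ([sO, sO] @ ser (enc_pred P) @ [sO] @ concat (map (ser \<circ> enc_rule) R))
  = Some (G A3, [sO, sO] @ ser (enc_pred gP) @ [sO] @ concat (map (ser \<circ> enc_rule) (map ren_rule R)))"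
  by (simp add: mrun_append opq_simps rulesA gP_def)

lemma passB: "mrun (G B0) ([sO, sO] @ ser (enc_pred P) @ [sO] @ concat (map (ser \<circ> enc_rule) R) @ [sC, sC, sO]
     @ concat (map (ser \<circ> enc_atom) D))
  = Some (G B9, concat (map (ser \<circ> enc_rule) (map aux_rule R)) @ [sC, sC, sO] @ concat (map (ser \<circ> enc_atom) (map ren_atom D)))"
  by (simp add: mrun_append opq_simps rulesB atomsB9)

lemma passC: "mrun (G C0) ([sO, sO] @ ser (enc_pred P) @ [sO] @ concat (map (ser \<circ> enc_rule) R) @ [sC, sC, sO]
     @ concat (map (ser \<circ> enc_atom) D) @ [sC, sO] @ concat (map (ser \<circ> enc_const) a) @ [sC])
  = Some (G C9, [sO] @ ser (enc_pred (aux_pred P)) @ [sO] @ concat (map (ser \<circ> enc_trm) (map const_trm a)) @ [sC, sC, sC])"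
  by (cases P) (simp add: mrun_append opq_simps constsC aux_pred_def)



instance ctx :: countable by countable_datatype
instance ctx2 :: countable by countable_datatype
instance gst :: countable by countable_datatype
instance mst :: countable by countable_datatype

lemma fin_ctx: "finite (UNIV :: ctx set)"
proof -
  have "UNIV = {XA5, XA7, XB5, XB9}" by (auto intro: ctx.exhaust)
  then show ?thesis by (metis finite.emptyI finite.insertI)
qed
lemma fin_ctx2: "finite (UNIV :: ctx2 set)"
proof -
  have "UNIV = {YB, YC}" by (auto intro: ctx2.exhaust)
  then show ?thesis by (metis finite.emptyI finite.insertI)
qed

lemma fin_gst: "finite (UNIV :: gst set)"
proof -
  let ?A = "set [Start, A0, A1, A2, A3, A4, A5, A6, A7, B0, B1, B2, B3, B4, B5, B6, B7, BQ, B8, B9, XO, XT0, XT1,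
     C0, C1, C2, C4, C5, C6, C7, C8, C8b, C10, C9, D0, RWB, RWC, RWD]"
  let ?B = "range RA0 \<union> range RA1 \<union> range RA2 \<union> range RA3 \<union> range RA4 \<union> range RA5 \<union> range RA6"
  let ?C = "range XP0 \<union> range XP1 \<union> range XP2 \<union> range XP3 \<union> range XP4 \<union> range XP5 \<union> range XP6"
  have "g \<in> ?A \<union> ?B \<union> ?C" for g by (cases g) auto
  then have "UNIV = ?A \<union> ?B \<union> ?C" by blast
  moreover have "finite (?A \<union> ?B \<union> ?C)" using fin_ctx fin_ctx2 by simp
  ultimately show ?thesis by simp
qed

definition SS :: "(mst \<times> nat) set" where "SS = {(s, j). validst s \<and> j \<le> Lmax}"

lemma fin_valid: "finite {s. validst s}"
proof -
  have "{s. validst s} \<subseteq> range G \<union> (\<lambda>(m, r, k, b). Opq m r k b) ` (UNIV \<times> UNIV \<times> {..KK} \<times> UNIV)"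
  proof
    fix s assume "s \<in> {s. validst s}" then show "s \<in> range G \<union> (\<lambda>(m, r, k, b). Opq m r k b) ` (UNIV \<times> UNIV \<times> {..KK} \<times> UNIV)"
    proof (cases s)
      case (Opq m r k b) then show ?thesis using \<open>s \<in> {s. validst s}\<close>
        by (auto intro!: image_eqI[where x="(m, r, k, b)"] simp del: KK_def)
    qed simp
  qed
  moreover have "finite (range G \<union> (\<lambda>(m, r, k, b). Opq m r k b) ` (UNIV \<times> UNIV \<times> {..KK} \<times> UNIV))"
    using fin_gst by simp
  ultimately show ?thesis by (rule finite_subset)
qed

lemma fin_SS: "finite SS"
proof -
  have "SS = {s. validst s} \<times> {..Lmax}" by (auto simp: SS_def simp del: Lmax_def)
  then show ?thesis using fin_valid by (metis finite_cartesian_product finite_atMost)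
qed

definition tmst :: "mst \<times> nat \<Rightarrow> nat" where "tmst x = (if x = (G Start, 0) then 0 else to_nat x + 2)"
definition dec :: "nat \<Rightarrow> mst \<times> nat" where "dec q = (if q = 0 then (G Start, 0) else from_nat (q - 2))"

lemma dec_tmst[simp]: "dec (tmst x) = x" by (simp add: tmst_def dec_def)
lemma tmst_ne1[simp]: "tmst x \<noteq> 1" by (simp add: tmst_def)
lemma tmst_neS0[simp]: "tmst x \<noteq> Suc 0" by (simp add: tmst_def)

definition clampst :: "mst \<times> nat \<Rightarrow> nat" where "clampst x = (if x \<in> SS then tmst x else 1)"
definition NS :: nat where "NS = Max (tmst ` SS) + 2"

lemma clamp_lt: "clampst x < NS"
proof (cases "x \<in> SS")
  case True
  then have "tmst x \<le> Max (tmst ` SS)" using fin_SS by simp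
  then show ?thesis using True by (simp add: clampst_def NS_def)
qed (simp add: clampst_def NS_def)

lemma NS_ge: "2 \<le> NS" by (simp add: NS_def)

definition tdelta :: "nat \<Rightarrow> sym option \<Rightarrow> nat \<Rightarrow> nat \<times> nat \<times> int \<times> int \<times> sym option" where
 "tdelta q a g = (if q = 1 then (1, 0, 0, 0, None) else
   (case dec q of (s, j) \<Rightarrow> (case mstep s a of (so, d, out) \<Rightarrow>
      if j < length out then (clampst (s, Suc j), 0, 0, 0, Some (out ! j))
      else (case so of None \<Rightarrow> (1, 0, 0, 0, None)
         | Some s' \<Rightarrow> (clampst (s', 0), 0, if d \<in> {-1, 0, 1} then d else 0, 0, None)))))"

definition TM :: tm where "TM = \<lparr>nst = NS, nwk = 1, delta = tdelta\<rparr>"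

lemma wf_TM: "wf_tm TM"
  unfolding wf_tm_def TM_def using NS_ge clamp_lt
  by (auto simp: tdelta_def split: prod.split option.split)

definition cf :: "nat \<Rightarrow> int \<Rightarrow> sym list \<Rightarrow> config" where
  "cf q p os = \<lparr>cstate = q, ipos = p, wtape = (\<lambda>_. 0), wpos = 0, outp = os\<rparr>"

lemma upd0: "((\<lambda>_. 0::nat)(0 := 0)) = (\<lambda>_. 0)" by auto

lemma step_emit:
  assumes "(s, Suc j) \<in> SS" "mstep s (read_input w p) = (so, d, out)" "j < length out" "0 \<le> p" "p \<le> int (length w) + 1"
  shows "tm_step TM w (cf (tmst (s, j)) p os) = cf (tmst (s, Suc j)) p (os @ [out ! j])"
  using assms by (simp add: tm_step_def cf_def TM_def tdelta_def clampst_def upd0)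

lemma step_move:
  assumes "mstep s (read_input w p) = (Some s', d, out)" "validst s'" "d \<in> {-1, 0, 1}"
    "0 \<le> p + d" "p + d \<le> int (length w) + 1"
  shows "tm_step TM w (cf (tmst (s, length out)) p os) = cf (tmst (s', 0)) (p + d) os"
  using assms by (simp add: tm_step_def cf_def TM_def tdelta_def clampst_def upd0 SS_def)

lemma step_halt:
  assumes "mstep s (read_input w p) = (None, d, out)" "0 \<le> p" "p \<le> int (length w) + 1"
  shows "tm_step TM w (cf (tmst (s, length out)) p os) = cf 1 p os"
  using assms by (simp add: tm_step_def cf_def TM_def tdelta_def upd0)

definition reach :: "sym list \<Rightarrow> config \<Rightarrow> config \<Rightarrow> bool" where
  "reach w c c' \<longleftrightarrow> (\<exists>k. (tm_step TM w ^^ k) c = c')"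

lemma reach_refl: "reach w c c" unfolding reach_def by (rule exI[of _ 0]) simp
lemma reach_step: "tm_step TM w c = c' \<Longrightarrow> reach w c c'" unfolding reach_def by (rule exI[of _ 1]) simp
lemma reach_trans: "reach w c1 c2 \<Longrightarrow> reach w c2 c3 \<Longrightarrow> reach w c1 c3"
  unfolding reach_def by (metis funpow_add comp_apply)

lemma macro_emit:
  assumes "validst s" "length out \<le> Lmax" "mstep s (read_input w p) = (so, d, out)" "0 \<le> p" "p \<le> int (length w) + 1"
  shows "reach w (cf (tmst (s, 0)) p os) (cf (tmst (s, length out)) p (os @ out))"
proof -
  have "j \<le> length out \<Longrightarrow> reach w (cf (tmst (s, 0)) p os) (cf (tmst (s, j)) p (os @ take j out))" for j
  proof (induct j)
    case 0 then show ?case by (simp add: reach_refl)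
  next
    case (Suc j)
    have "(s, Suc j) \<in> SS" using Suc.prems assms(1,2) by (simp add: SS_def del: Lmax_def)
    then have "tm_step TM w (cf (tmst (s, j)) p (os @ take j out)) = cf (tmst (s, Suc j)) p ((os @ take j out) @ [out ! j])"
      using step_emit assms Suc.prems by simp
    then show ?case using Suc by (metis Suc_le_lessD append_assoc reach_step reach_trans take_Suc_conv_app_nth Suc_leD)
  qed
  from this[of "length out"] show ?thesis by simp
qed

lemma macro_move:
  assumes "validst s" "length out \<le> Lmax" "mstep s (read_input w p) = (Some s', d, out)" "validst s'"
    "d \<in> {-1, 0, 1}" "0 \<le> p" "p \<le> int (length w) + 1" "0 \<le> p + d" "p + d \<le> int (length w) + 1"
  shows "reach w (cf (tmst (s, 0)) p os) (cf (tmst (s', 0)) (p + d) (os @ out))"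
  using macro_emit[OF assms(1,2,3,6,7)] step_move[OF assms(3,4,5,8,9)] reach_step reach_trans by blast

lemma macro_halt:
  assumes "validst s" "length out \<le> Lmax" "mstep s (read_input w p) = (None, d, out)"
    "0 \<le> p" "p \<le> int (length w) + 1"
  shows "reach w (cf (tmst (s, 0)) p os) (cf 1 p (os @ out))"
  using macro_emit[OF assms(1,2,3,4,5)] step_halt[OF assms(3,4,5)] reach_step reach_trans by blast

lemma mrun_valid: "mrun s xs = Some r \<Longrightarrow> validst s"
  by (cases xs) (auto split: if_splits)

lemma read_at: "w = pre @ x # rest \<Longrightarrow> read_input w (int (length pre) + 1) = Some x"
  by (simp add: read_input_def)

lemma mrun_reach:
  "mrun s xs = Some (s', out) \<Longrightarrow> w = pre @ xs @ rest \<Longrightarrow>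
   reach w (cf (tmst (s, 0)) (int (length pre) + 1) os) (cf (tmst (s', 0)) (int (length pre) + int (length xs) + 1) (os @ out))"
proof (induct xs arbitrary: s pre os out)
  case Nil then show ?case by (simp add: reach_refl split: if_splits)
next
  case (Cons x xs)
  from Cons.prems(1) obtain s1 o1 o2 where v: "validst s" and ms: "mstep s (Some x) = (Some s1, 1, o1)"
    and lo: "length o1 \<le> Lmax" and mr: "mrun s1 xs = Some (s', o2)" and oo: "out = o1 @ o2"
    by (auto split: if_splits option.splits prod.splits)
  have rd: "read_input w (int (length pre) + 1) = Some x" using Cons.prems(2) by (simp add: read_at)
  have v1: "validst s1" using mrun_valid mr by blast
  have "reach w (cf (tmst (s, 0)) (int (length pre) + 1) os) (cf (tmst (s1, 0)) (int (length pre) + 1 + 1) (os @ o1))"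
    by (rule macro_move[OF v lo _ v1]) (use ms rd Cons.prems(2) in auto)
  moreover have "reach w (cf (tmst (s1, 0)) (int (length (pre @ [x])) + 1) (os @ o1))
     (cf (tmst (s', 0)) (int (length (pre @ [x])) + int (length xs) + 1) ((os @ o1) @ o2))"
    by (rule Cons.hyps[OF mr]) (use Cons.prems(2) in simp)
  ultimately show ?case using oo by (auto intro: reach_trans simp: algebra_simps)
qed

lemma rewind:
  assumes "\<And>x. gstep g (Some x) = (Some (G g), -1, [])" "gstep g None = (Some (G n), 1, [])"
  shows "int p \<le> int (length w) \<Longrightarrow> reach w (cf (tmst (G g, 0)) (int p) os) (cf (tmst (G n, 0)) 1 os)"
proof (induct p)
  case 0
  have "read_input w 0 = None" by (simp add: read_input_def)
  then show ?case using macro_move[of "G g" "[]" w 0 "G n" 1 os] assms by simp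
next
  case (Suc p)
  have "read_input w (int (Suc p)) = Some (w ! p)" using Suc.prems by (simp add: read_input_def)
  then have "reach w (cf (tmst (G g, 0)) (int (Suc p)) os) (cf (tmst (G g, 0)) (int (Suc p) + -1) (os @ []))"
    using Suc.prems assms by (intro macro_move) auto
  then show ?case using Suc by (auto intro: reach_trans)
qed



lemma bin_pow: "bin (2 ^ n - 1) = replicate n S1"
proof (induct n)
  case 0 then show ?case by simp
next
  case (Suc n)
  have eq: "(2::nat) ^ Suc n - 1 = 2 * (2 ^ n - 1) + 1" by (induct n) auto
  have "bin (2 ^ Suc n - 1) = bin (2 ^ n - 1) @ [S1]" by (simp only: eq bin_odd)
  then show ?case using Suc by (simp add: replicate_append_same)
qed

lemma bin_tin[simp]: "bin (nat ((2::int) ^ n - 1)) = replicate n S1"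
proof -
  have "nat ((2::int) ^ n - 1) = 2 ^ n - 1" by (simp add: nat_diff_distrib nat_power_eq)
  then show ?thesis using bin_pow by simp
qed

lemma pow_nlt[simp]: "\<not> (2::int) ^ n < 1" by (simp add: not_less)
lemma bin3[simp]: "bin 3 = [S1, S1]" by (simp add: bin.simps)

lemma wdec: "enc_qe (Q, D, a) = [sO, sO] @ ser (enc_pred (fst Q)) @ [sO] @ concat (map (ser \<circ> enc_rule) (snd Q))
   @ [sC] @ [sC, sO] @ concat (map (ser \<circ> enc_atom) D) @ [sC, sO] @ concat (map (ser \<circ> enc_const) a) @ [sC, sC]"
  by (simp add: enc_qe_def enc_query_def enc_dataset_def)

lemma fixed_len: "length (concat (map (ser \<circ> enc_rule) fixed)) \<le> Lmax"
  by (simp add: fixed_def allP_def gP_def eP_def okA_def okP_def enc_int_def)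

lemma out_eq: "[sO, sO] @ ser (enc_pred gP) @ [sO] @ concat (map (ser \<circ> enc_rule) (map ren_rule (snd Q)))
  @ concat (map (ser \<circ> enc_rule) fixed)
  @ (concat (map (ser \<circ> enc_rule) (map aux_rule (snd Q))) @ [sC, sC, sO] @ concat (map (ser \<circ> enc_atom) (map ren_atom D)))
  @ ([sO] @ ser (enc_pred (aux_pred (fst Q))) @ [sO] @ concat (map (ser \<circ> enc_trm) (map const_trm a)) @ [sC, sC, sC])
  @ [sO, sL, sE, sL] @ replicate (length (enc_qe (Q, D, a))) S1 @ [sE, sC, sO, sL, sE, sL, sE, sC, sC]
  = enc_dtp (phi (Q, D, a))"
  by (simp add: enc_dtp_def phi_def qQ_def progQ_def enc_query_def enc_dataset_def dD_def tin_def enc_int_def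
)

lemma tm_ok: "tm_computes TM (enc_qe (Q, D, a)) (enc_dtp (phi (Q, D, a)))"
proof -
  define w where "w = enc_qe (Q, D, a)"
  define xA where "xA = [sO, sO] @ ser (enc_pred (fst Q)) @ [sO] @ concat (map (ser \<circ> enc_rule) (snd Q))"
  define wD where "wD = concat (map (ser \<circ> enc_atom) D)"
  define wA where "wA = concat (map (ser \<circ> enc_const) a)"
  define xB where "xB = xA @ [sC, sC, sO] @ wD"
  define xC where "xC = xB @ [sC, sO] @ wA @ [sC]"
  define oA where "oA = [sO, sO] @ ser (enc_pred gP) @ [sO] @ concat (map (ser \<circ> enc_rule) (map ren_rule (snd Q)))"
  define fx where "fx = concat (map (ser \<circ> enc_rule) fixed)"
  define oB where "oB = concat (map (ser \<circ> enc_rule) (map aux_rule (snd Q))) @ [sC, sC, sO] @ concat (map (ser \<circ> enc_atom) (map ren_atom D))"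
  define oC where "oC = [sO] @ ser (enc_pred (aux_pred (fst Q))) @ [sO] @ concat (map (ser \<circ> enc_trm) (map const_trm a)) @ [sC, sC, sC]"
  define sfx where "sfx = [sE, sC, sO, sL, sE, sL, sE, sC, sC]"
  have wA': "w = xA @ sC # ([sC, sO] @ wD @ [sC, sO] @ wA @ [sC, sC])"
    using wdec[of Q D a] by (simp add: w_def xA_def wD_def wA_def)
  have wB': "w = xB @ sC # ([sO] @ wA @ [sC, sC])" using wA' by (simp add: xB_def)
  have wC': "w = xC @ sC # []" using wB' by (simp add: xC_def)
  have lA: "length xA \<le> length w" "length xB \<le> length w" "length xC \<le> length w"
    using wA' wB' wC' by simp_all
  have mA: "mrun (G A0) xA = Some (G A3, oA)" unfolding xA_def oA_def by (rule passA)
  have mB: "mrun (G B0) xB = Some (G B9, oB)" unfolding xB_def xA_def oB_def wD_def using passB by simp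
  have mC: "mrun (G C0) xC = Some (G C9, oC)" unfolding xC_def xB_def xA_def oC_def wD_def wA_def using passC by simp
  have r1: "reach w (cf 0 0 []) (cf (tmst (G A0, 0)) 1 [])"
    using macro_move[of "G Start" "[]" w 0 "G A0" 1 "[]"] by (simp add: read_input_def tmst_def)
  have r2: "reach w (cf (tmst (G A0, 0)) 1 []) (cf (tmst (G A3, 0)) (int (length xA) + 1) oA)"
    using mrun_reach[OF mA, of w "[]" _ "[]"] wA' by simp
  have r3: "reach w (cf (tmst (G A3, 0)) (int (length xA) + 1) oA) (cf (tmst (G RWB, 0)) (int (length xA)) (oA @ fx))"
    using macro_move[of "G A3" fx w "int (length xA) + 1" "G RWB" "-1" oA] read_at[OF wA'] lA fixed_len
    by (simp add: fx_def)
  have r4: "reach w (cf (tmst (G RWB, 0)) (int (length xA)) (oA @ fx)) (cf (tmst (G B0, 0)) 1 (oA @ fx))"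
    by (rule rewind) (use lA in simp_all)
  have r5: "reach w (cf (tmst (G B0, 0)) 1 (oA @ fx)) (cf (tmst (G B9, 0)) (int (length xB) + 1) (oA @ fx @ oB))"
    using mrun_reach[OF mB, of w "[]" _ "oA @ fx"] wB' by simp
  have r6: "reach w (cf (tmst (G B9, 0)) (int (length xB) + 1) (oA @ fx @ oB)) (cf (tmst (G RWC, 0)) (int (length xB)) (oA @ fx @ oB))"
    using macro_move[of "G B9" "[]" w "int (length xB) + 1" "G RWC" "-1" "oA @ fx @ oB"] read_at[OF wB'] lA
    by simp
  have r7: "reach w (cf (tmst (G RWC, 0)) (int (length xB)) (oA @ fx @ oB)) (cf (tmst (G C0, 0)) 1 (oA @ fx @ oB))"
    by (rule rewind) (use lA in simp_all)
  have r8: "reach w (cf (tmst (G C0, 0)) 1 (oA @ fx @ oB)) (cf (tmst (G C9, 0)) (int (length xC) + 1) (oA @ fx @ oB @ oC))"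
    using mrun_reach[OF mC, of w "[]" _ "oA @ fx @ oB"] wC' by simp
  have r9: "reach w (cf (tmst (G C9, 0)) (int (length xC) + 1) (oA @ fx @ oB @ oC))
     (cf (tmst (G RWD, 0)) (int (length xC)) (oA @ fx @ oB @ oC @ [sO, sL, sE, sL]))"
    using macro_move[of "G C9" "[sO, sL, sE, sL]" w "int (length xC) + 1" "G RWD" "-1" "oA @ fx @ oB @ oC"] read_at[OF wC'] lA
    by simp
  have r10: "reach w (cf (tmst (G RWD, 0)) (int (length xC)) (oA @ fx @ oB @ oC @ [sO, sL, sE, sL]))
     (cf (tmst (G D0, 0)) 1 (oA @ fx @ oB @ oC @ [sO, sL, sE, sL]))"
    by (rule rewind) (use lA in simp_all)
  have r11: "reach w (cf (tmst (G D0, 0)) 1 (oA @ fx @ oB @ oC @ [sO, sL, sE, sL]))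
     (cf (tmst (G D0, 0)) (int (length w) + 1) (oA @ fx @ oB @ oC @ [sO, sL, sE, sL] @ replicate (length w) S1))"
    using mrun_reach[OF mrun_D0[of w], where w=w and pre="[]" and rest="[]" and os="oA @ fx @ oB @ oC @ [sO, sL, sE, sL]"] by simp
  have r12: "reach w (cf (tmst (G D0, 0)) (int (length w) + 1) (oA @ fx @ oB @ oC @ [sO, sL, sE, sL] @ replicate (length w) S1))
     (cf 1 (int (length w) + 1) (oA @ fx @ oB @ oC @ [sO, sL, sE, sL] @ replicate (length w) S1 @ sfx))"
    using macro_halt[of "G D0" sfx w "int (length w) + 1" 0 "oA @ fx @ oB @ oC @ [sO, sL, sE, sL] @ replicate (length w) S1"]
    by (simp add: read_input_def sfx_def)
  have "reach w (cf 0 0 []) (cf 1 (int (length w) + 1) (oA @ fx @ oB @ oC @ [sO, sL, sE, sL] @ replicate (length w) S1 @ sfx))"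
    by (rule reach_trans[OF r1 reach_trans[OF r2 reach_trans[OF r3 reach_trans[OF r4 reach_trans[OF r5
       reach_trans[OF r6 reach_trans[OF r7 reach_trans[OF r8 reach_trans[OF r9 reach_trans[OF r10
       reach_trans[OF r11 r12]]]]]]]]]]])
  moreover have "oA @ fx @ oB @ oC @ [sO, sL, sE, sL] @ replicate (length w) S1 @ sfx = enc_dtp (phi (Q, D, a))"
    using out_eq[of Q D a] by (simp add: oA_def fx_def oB_def oC_def sfx_def w_def)
  moreover have "init_config = cf 0 0 []" by (simp add: init_config_def cf_def)
  ultimately have "reach w init_config (cf 1 (int (length w) + 1) (enc_dtp (phi (Q, D, a))))" by simp
  then obtain k where k: "(tm_step TM w ^^ k) init_config = cf 1 (int (length w) + 1) (enc_dtp (phi (Q, D, a)))"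
    unfolding reach_def by blast
  show ?thesis unfolding tm_computes_def tm_run_def
    by (rule exI[of _ k]) (simp add: k[unfolded w_def] cf_def)
qed

lemma dw0: "(case tdelta q a g of (q', g', di, dw, out) \<Rightarrow> dw) = 0"
  by (simp add: tdelta_def split: prod.split option.split)

lemma wpos_step: "wpos (tm_step TM w c) = wpos c"
  using dw0[of "cstate c" "read_input w (ipos c)" "wtape c (wpos c)"]
  by (auto simp: tm_step_def TM_def split: prod.split)

lemma wpos_run: "wpos (tm_run TM w k) = 0"
  by (induct k) (simp_all add: tm_run_def init_config_def wpos_step)

theorem mainTheorem4:
  shows "\<exists>\<phi> :: qe_inst \<Rightarrow> dtp_inst.
     logspace_computable qe_instance enc_qe enc_dtp \<phi>
   \<and> (\<forall>I. qe_instance I \<longrightarrow> dtp_instance (\<phi> I) \<and> (qe_holds I \<longleftrightarrow> dtp_holds (\<phi> I)))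
   \<and> (\<forall>I I'. qe_instance I \<longrightarrow> qe_instance I' \<longrightarrow> fst I = fst I' \<longrightarrow>
         fst (\<phi> I) = fst (\<phi> I'))"
proof (intro exI conjI allI impI)
  show "logspace_computable qe_instance enc_qe enc_dtp phi"
    unfolding logspace_computable_def
  proof (intro exI conjI allI impI)
    show "wf_tm TM" by (rule wf_TM)
    fix x :: qe_inst
    obtain Q D a where x: "x = (Q, D, a)" by (cases x) auto
    show "tm_computes TM (enc_qe x) (enc_dtp (phi x))" using tm_ok x by simp
    show "tm_space_bounded TM (enc_qe x) (0 * log 2 (real (length (enc_qe x)) + 2))"
      by (simp add: tm_space_bounded_def wpos_run)
  qed
next
  fix I :: qe_inst assume "qe_instance I"
  moreover obtain Q D a where "I = (Q, D, a)" by (cases I) auto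
  ultimately show "dtp_instance (phi I)" "qe_holds I = dtp_holds (phi I)"
    using dtp_inst dtp_equiv by auto
next
  fix I I' :: qe_inst assume "fst I = fst I'"
  then show "fst (phi I) = fst (phi I')" by (cases I, cases I') (simp add: phi_fst)
qed


end
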